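(* Let $S$ be a pairwise-intersecting double-interval society with $n\ge 1$ voters and approval number $a(S)$. Then $$a(S)\ \ge\ \left\lceil 2n+\tfrac12-\sqrt{3n^2-n+\tfrac14}\right\rceil,$$ so that $$\frac{a(S)}{n}\ \ge\ 2-\sqrt3+\frac{3+\sqrt3}{6n}-\frac{\sqrt3}{24n^2},$$ and equivalently $$n\ \le\ \left\lfloor 2a(S)-\tfrac32+\sqrt{3a(S)^2-5a(S)+\tfrac94}\right\rfloor.$$
   Context: A double-interval society consists of a finite set $V$ of $n$ voters, each voter $v$ having an approval set $A_v\subseteq\mathbb{R}$ that is the union of two disjoint bounded closed intervals. The society is pairwise-intersecting if $A_u\cap A_v\neq\emptyset$ for all voters $u,v$. For a point (platform) $p\in\mathbb{R}$, its approval number $a(p)$ is the number of voters $v$ with $p\in A_v$; the approval number of the society is $a(S)=\max_{p\in\mathbb{R}}a(p)$, and its approval ratio is $a(S)/n$. *)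

theory Defs
  imports "HOL-Analysis.Analysis"
begin

definition double_interval :: "real set \<Rightarrow> bool" where
  "double_interval S \<longleftrightarrow>
     (\<exists>a b c d. a \<le> b \<and> b < c \<and> c \<le> d \<and> S = {a..b} \<union> {c..d})"

definition double_interval_society :: "'v set \<Rightarrow> ('v \<Rightarrow> real set) \<Rightarrow> bool" where
  "double_interval_society V A \<longleftrightarrow> finite V \<and> (\<forall>v\<in>V. double_interval (A v))"

definition pairwise_intersecting :: "'v set \<Rightarrow> ('v \<Rightarrow> real set) \<Rightarrow> bool" where
  "pairwise_intersecting V A \<longleftrightarrow> (\<forall>u\<in>V. \<forall>v\<in>V. A u \<inter> A v \<noteq> {})"

definition approval :: "'v set \<Rightarrow> ('v \<Rightarrow> real set) \<Rightarrow> real \<Rightarrow> nat" where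
  "approval V A p = card {v\<in>V. p \<in> A v}"

definition approval_number :: "'v set \<Rightarrow> ('v \<Rightarrow> real set) \<Rightarrow> nat" where
  "approval_number V A = Max (range (approval V A))"

end

theory Submission
  imports Defs
begin

definition gsum :: "nat \<Rightarrow> nat \<Rightarrow> nat" where
  "gsum b m = (\<Sum>k<m. min k b)"

lemma gsum_Suc: "gsum b (Suc m) = gsum b m + min m b"
  by (simp add: gsum_def)

lemma gsum_closed:
  "real (2 * gsum b m) = (if m \<le> b then real m * (real m - 1) else real b * (2 * real m - real b - 1))"
proof (induction m)
  case 0
  then show ?case by (simp add: gsum_def)
next
  case (Suc m)
  show ?case
  proof (cases "Suc m \<le> b")
    case True
    then show ?thesis using Suc by (simp add: gsum_Suc algebra_simps)
  next
    case False
    show ?thesis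
    proof (cases "m = b")
      case True
      then show ?thesis using Suc by (simp add: gsum_Suc algebra_simps)
    next
      case F2: False
      then have "\<not> m \<le> b" using False by simp
      then show ?thesis using Suc False by (simp add: gsum_Suc algebra_simps)
    qed
  qed
qed

lemma final_arith:
  fixes r N :: real
  assumes key: "N^2 - N \<le> (r - 1) * (4 * N - r)" and N1: "N \<ge> 1"
  shows "r \<ge> 2 * N + 1/2 - sqrt (3 * N^2 - N + 1/4)"
    and "r / N \<ge> 2 - sqrt 3 + (3 + sqrt 3) / (6 * N) - sqrt 3 / (24 * N^2)"
    and "N \<le> 2 * r - 3/2 + sqrt (3 * r^2 - 5 * r + 9/4)"
proof -
  have k: "(r - 1) * (4 * N - r) = 4*N*r - r^2 - 4*N + r" by (simp add: algebra_simps power2_eq_square)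
  have e1: "(r - (2*N + 1/2))^2 = r^2 - 4*N*r - r + 4*N^2 + 2*N + 1/4"
    by (simp add: algebra_simps power2_eq_square)
  have "(r - (2*N + 1/2))^2 \<le> 3 * N^2 - N + 1/4" using key k e1 by linarith
  then have "r - (2*N + 1/2) \<ge> - sqrt (3 * N^2 - N + 1/4)"
  proof -
    assume h: "(r - (2*N + 1/2))^2 \<le> 3 * N^2 - N + 1/4"
    have "((2*N + 1/2) - r)^2 \<le> 3 * N^2 - N + 1/4" using h by (simp add: power2_commute)
    then have "(2*N + 1/2) - r \<le> sqrt (3 * N^2 - N + 1/4)" by (rule real_le_rsqrt)
    then show ?thesis by linarith
  qed
  then show c1: "r \<ge> 2 * N + 1/2 - sqrt (3 * N^2 - N + 1/4)" by simp
  have e3: "(N - (2*r - 3/2))^2 = N^2 - 4*N*r + 3*N + 4*r^2 - 6*r + 9/4"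
    by (simp add: algebra_simps power2_eq_square)
  have "(N - (2*r - 3/2))^2 \<le> 3 * r^2 - 5 * r + 9/4" using key k e3 by linarith
  then have "N - (2*r - 3/2) \<le> sqrt (3 * r^2 - 5 * r + 9/4)" by (rule real_le_rsqrt)
  then show "N \<le> 2 * r - 3/2 + sqrt (3 * r^2 - 5 * r + 9/4)" by simp
  define u where "u = 1 / (24 * N)"
  define t where "t = sqrt 3 * (N - 1/6 + u)"
  have u0: "u \<ge> 0" using N1 by (simp add: u_def)
  have t0: "t \<ge> 0" using N1 u0 by (simp add: t_def)
  have Nu: "2 * N * u = 1/12" using N1 by (simp add: u_def)
  have sq: "(N - 1/6 + u)^2 = N^2 - N/3 + 1/12 + (u - 1/6)^2"
  proof -
    have "(N - 1/6 + u)^2 = N^2 - N/3 + 1/36 + u^2 - u/3 + 2 * N * u"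
      by (simp add: algebra_simps power2_eq_square)
    moreover have "(u - 1/6)^2 = u^2 - u/3 + 1/36" by (simp add: algebra_simps power2_eq_square)
    ultimately show ?thesis using Nu by linarith
  qed
  have "t^2 = 3 * (N - 1/6 + u)^2" by (simp add: t_def power_mult_distrib)
  also have "\<dots> \<ge> 3 * N^2 - N + 1/4" using sq zero_le_power2[of "u - 1/6"] by linarith
  finally have "sqrt (3 * N^2 - N + 1/4) \<le> t"
    using real_sqrt_le_mono[of "3 * N^2 - N + 1/4" "t^2"] t0 by simp
  then have "r \<ge> 2 * N + 1/2 - t" using c1 by linarith
  then have "r / N \<ge> (2 * N + 1/2 - t) / N" using N1 by (simp add: divide_right_mono)
  moreover have "(2 * N + 1/2 - t) / N = 2 - sqrt 3 + (3 + sqrt 3) / (6 * N) - sqrt 3 / (24 * N^2)"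
    using N1 by (simp add: t_def u_def field_simps power2_eq_square)
  ultimately show "r / N \<ge> 2 - sqrt 3 + (3 + sqrt 3) / (6 * N) - sqrt 3 / (24 * N^2)" by simp
qed


lemma core:
  fixes lo hi :: "'i \<Rightarrow> real" and voter :: "'i \<Rightarrow> 'v" and a :: nat
  assumes "finite X" "\<forall>x\<in>X. lo x \<le> hi x" "\<forall>p. card {x\<in>X. p \<in> {lo x..hi x}} \<le> a"
  shows "card {(voter x, voter y) | x y. x\<in>X \<and> y\<in>X \<and> voter x \<noteq> voter y
            \<and> {lo x..hi x} \<inter> {lo y..hi y} \<noteq> {}} \<le> 2 * gsum (a-1) (card X)"
  using assms
proof (induction "card X" arbitrary: X)
  case 0
  then have "X = {}" by simp
  then show ?case by simp
next
  case (Suc m X)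
  define E where "E Y = {(voter x, voter y) | x y. x\<in>Y \<and> y\<in>Y \<and> voter x \<noteq> voter y
            \<and> {lo x..hi x} \<inter> {lo y..hi y} \<noteq> {}}" for Y
  have Efin: "finite Y \<Longrightarrow> finite (E Y)" for Y
  proof -
    assume "finite Y"
    moreover have "E Y \<subseteq> voter ` Y \<times> voter ` Y" by (auto simp: E_def)
    ultimately show ?thesis by (meson finite_SigmaI finite_imageI finite_subset)
  qed
  have ne: "X \<noteq> {}" using Suc.hyps(2) by auto
  have fl: "finite (lo ` X)" using Suc.prems(1) by simp
  obtain J where J: "J \<in> X" "\<forall>x\<in>X. lo x \<le> lo J"
  proof -
    have "Max (lo ` X) \<in> lo ` X" using Max_in[OF fl] ne by simp
    then obtain J where "J \<in> X" "lo J = Max (lo ` X)" by auto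
    moreover have "\<forall>x\<in>X. lo x \<le> Max (lo ` X)" using Max_ge[OF fl] by simp
    ultimately show ?thesis using that by metis
  qed
  define X' where "X' = X - {J}"
  have cX': "card X' = m" using Suc.hyps(2) J(1) Suc.prems(1) by (simp add: X'_def)
  have fX': "finite X'" using Suc.prems(1) by (simp add: X'_def)
  have p3: "\<forall>p. card {x\<in>X'. p \<in> {lo x..hi x}} \<le> a"
  proof
    fix p
    have "card {x\<in>X'. p \<in> {lo x..hi x}} \<le> card {x\<in>X. p \<in> {lo x..hi x}}"
      by (rule card_mono) (use Suc.prems(1) in \<open>auto simp: X'_def\<close>)
    then show "card {x\<in>X'. p \<in> {lo x..hi x}} \<le> a" using Suc.prems(3) by (meson le_trans)
  qed
  have IH: "card (E X') \<le> 2 * gsum (a-1) m"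
    using Suc.hyps(1)[of X'] cX' fX' Suc.prems(2) p3 unfolding E_def X'_def by auto
  define S where "S = {y\<in>X'. lo J \<in> {lo y..hi y}}"
  have fS: "finite S" using fX' by (simp add: S_def)
  have cS1: "card S \<le> m" using card_mono[OF fX', of S] cX' by (auto simp: S_def)
  have cS2: "card S \<le> a - 1"
  proof -
    have "insert J S \<subseteq> {x\<in>X. lo J \<in> {lo x..hi x}}" using J Suc.prems(2) by (auto simp: S_def X'_def)
    then have "card (insert J S) \<le> card {x\<in>X. lo J \<in> {lo x..hi x}}"
      by (rule card_mono[rotated]) (use Suc.prems(1) in simp)
    then have "card (insert J S) \<le> a" using Suc.prems(3) by (meson le_trans)
    moreover have "J \<notin> S" by (simp add: S_def X'_def)
    ultimately show ?thesis using fS by simp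
  qed
  have sub: "E X \<subseteq> E X' \<union> (\<lambda>y. (voter J, voter y)) ` S \<union> (\<lambda>y. (voter y, voter J)) ` S"
  proof
    fix q assume "q \<in> E X"
    then obtain x y where q: "q = (voter x, voter y)" "x\<in>X" "y\<in>X" "voter x \<noteq> voter y"
        "{lo x..hi x} \<inter> {lo y..hi y} \<noteq> {}" by (auto simp: E_def)
    show "q \<in> E X' \<union> (\<lambda>y. (voter J, voter y)) ` S \<union> (\<lambda>y. (voter y, voter J)) ` S"
    proof (cases "x = J")
      case True
      then have yJ: "y \<noteq> J" using q by auto
      have "lo y \<le> lo J" using J q by auto
      moreover obtain p where "p \<in> {lo x..hi x}" "p \<in> {lo y..hi y}" using q(5) by blast
      ultimately have "lo J \<in> {lo y..hi y}" using True by auto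
      then have "y \<in> S" using yJ q by (simp add: S_def X'_def)
      then show ?thesis using q True by auto
    next
      case False
      show ?thesis
      proof (cases "y = J")
        case True
        have "lo x \<le> lo J" using J q by auto
        moreover obtain p where "p \<in> {lo x..hi x}" "p \<in> {lo y..hi y}" using q(5) by blast
        ultimately have "lo J \<in> {lo x..hi x}" using True by auto
        then have "x \<in> S" using False q by (simp add: S_def X'_def)
        then show ?thesis using q True by auto
      next
        case F2: False
        have "q \<in> E X'" unfolding E_def X'_def using q False F2 by blast
        then show ?thesis by blast
      qed
    qed
  qed
  have "card (E X) \<le> card (E X' \<union> (\<lambda>y. (voter J, voter y)) ` S \<union> (\<lambda>y. (voter y, voter J)) ` S)"
    by (rule card_mono) (use Efin[OF fX'] fS sub in auto)
  also have "\<dots> \<le> card (E X') + card ((\<lambda>y. (voter J, voter y)) ` S) + card ((\<lambda>y. (voter y, voter J)) ` S)"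
    by (meson card_Un_le add_le_mono le_trans order_refl)
  also have "\<dots> \<le> card (E X') + card S + card S"
    using card_image_le[OF fS, of "\<lambda>y. (voter J, voter y)"] card_image_le[OF fS, of "\<lambda>y. (voter y, voter J)"] by linarith
  also have "\<dots> \<le> 2 * gsum (a-1) m + 2 * min m (a-1)" using IH cS1 cS2 by simp
  also have "\<dots> = 2 * gsum (a-1) (card X)" using Suc.hyps(2)[symmetric] by (simp add: gsum_Suc)
  finally show ?case unfolding E_def .
qed


theorem theorem4p1:
  fixes V :: "'v set" and A :: "'v \<Rightarrow> real set" and n :: nat
  assumes "double_interval_society V A"
    and "pairwise_intersecting V A"
    and "card V = n" and "n \<ge> 1"
  shows "real (approval_number V A) \<ge> of_int \<lceil>2 * real n + 1/2 - sqrt (3 * (real n)^2 - real n + 1/4)\<rceil>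
    \<and> real (approval_number V A) / real n \<ge>
        2 - sqrt 3 + (3 + sqrt 3) / (6 * real n) - sqrt 3 / (24 * (real n)^2)
    \<and> real n \<le> of_int \<lfloor>2 * real (approval_number V A) - 3/2
        + sqrt (3 * (real (approval_number V A))^2 - 5 * real (approval_number V A) + 9/4)\<rfloor>"
proof -
  define a where "a = approval_number V A"
  have finV: "finite V" using assms(1) by (simp add: double_interval_society_def)
  have h: "\<forall>v\<in>V. \<exists>a b c d. a \<le> b \<and> b < c \<and> c \<le> d \<and> A v = {a..b} \<union> {c..d}"
    using assms(1) unfolding double_interval_society_def double_interval_def by blast
  obtain la where h1: "\<forall>v\<in>V. \<exists>b c d. la v \<le> b \<and> b < c \<and> c \<le> d \<and> A v = {la v..b} \<union> {c..d}"
    using bchoice[OF h] by blast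
  obtain ha where h2: "\<forall>v\<in>V. \<exists>c d. la v \<le> ha v \<and> ha v < c \<and> c \<le> d \<and> A v = {la v..ha v} \<union> {c..d}"
    using bchoice[OF h1] by blast
  obtain lc where h3: "\<forall>v\<in>V. \<exists>d. la v \<le> ha v \<and> ha v < lc v \<and> lc v \<le> d \<and> A v = {la v..ha v} \<union> {lc v..d}"
    using bchoice[OF h2] by blast
  obtain hc where H: "\<forall>v\<in>V. la v \<le> ha v \<and> ha v < lc v \<and> lc v \<le> hc v \<and> A v = {la v..ha v} \<union> {lc v..hc v}"
    using bchoice[OF h3] by blast
  define lo where "lo x = (if snd x then lc (fst x) else la (fst x))" for x :: "'v \<times> bool"
  define hi where "hi x = (if snd x then hc (fst x) else ha (fst x))" for x :: "'v \<times> bool"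
  define X where "X = V \<times> (UNIV :: bool set)"
  have finX: "finite X" using finV by (simp add: X_def)
  have cardX: "card X = 2 * n" using assms(3) finV by (simp add: X_def card_cartesian_product)
  have lohi: "\<forall>x\<in>X. lo x \<le> hi x" using H by (auto simp: X_def lo_def hi_def)
  have appr_le: "approval V A p \<le> n" for p
    unfolding approval_def using assms(3) finV by (metis (no_types, lifting) card_mono mem_Collect_eq subsetI)
  have finR: "finite (range (approval V A))"
    by (rule finite_subset[of _ "{..n}"]) (use appr_le in auto)
  have appr_a: "approval V A p \<le> a" for p
    unfolding a_def approval_number_def using finR by simp
  have a_le: "a \<le> n"
  proof -
    have "a \<in> range (approval V A)" unfolding a_def approval_number_def using finR Max_in by blast
    then show ?thesis using appr_le by auto
  qed
  obtain v0 where v0: "v0 \<in> V" using assms(3,4) by fastforce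
  have a1: "a \<ge> 1"
  proof -
    have "la v0 \<in> A v0" using H v0 by auto
    then have "card {v\<in>V. la v0 \<in> A v} \<ge> 1" using v0 finV
    proof -
      assume h: "la v0 \<in> A v0"
      have "finite {v\<in>V. la v0 \<in> A v}" using finV by simp
      moreover have "v0 \<in> {v\<in>V. la v0 \<in> A v}" using h v0 by simp
      ultimately have "card {v\<in>V. la v0 \<in> A v} > 0" using card_gt_0_iff by blast
      then show ?thesis by simp
    qed
    then show ?thesis using appr_a[of "la v0"] by (simp add: approval_def)
  qed
  have cnt: "\<forall>p. card {x\<in>X. p \<in> {lo x..hi x}} \<le> a"
  proof
    fix p
    let ?Y = "{x\<in>X. p \<in> {lo x..hi x}}"
    have inj: "inj_on fst ?Y"
    proof (rule inj_onI)
      fix x y assume x: "x \<in> ?Y" and y: "y \<in> ?Y" and e: "fst x = fst y"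
      obtain u s where xs: "x = (u, s)" by fastforce
      obtain t where yt: "y = (u, t)" using e xs by (metis fst_conv surj_pair)
      have u: "u \<in> V" using x xs by (simp add: X_def)
      show "x = y"
      proof (rule ccontr)
        assume "x \<noteq> y"
        then have "s \<noteq> t" using xs yt by simp
        then show False using x y xs yt H u by (cases s; cases t; auto simp: lo_def hi_def)
      qed
    qed
    have "fst ` ?Y \<subseteq> {v\<in>V. p \<in> A v}" using H by (auto simp: X_def lo_def hi_def)
    then have "card (fst ` ?Y) \<le> card {v\<in>V. p \<in> A v}" using finV by (simp add: card_mono)
    then have "card ?Y \<le> approval V A p" using card_image[OF inj] by (simp add: approval_def)
    then show "card ?Y \<le> a" using appr_a[of p] by linarith
  qed
  define E where "E = {(fst x, fst y) | x y. x\<in>X \<and> y\<in>X \<and> fst x \<noteq> fst y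
            \<and> {lo x..hi x} \<inter> {lo y..hi y} \<noteq> {}}"
  have Ebound: "card E \<le> 2 * gsum (a-1) (2 * n)"
    using core[OF finX lohi cnt, of fst] cardX unfolding E_def by simp
  have Efin: "finite E"
  proof -
    have "E \<subseteq> V \<times> V" by (auto simp: E_def X_def)
    then show ?thesis using finV by (meson finite_SigmaI finite_subset)
  qed
  define D where "D = V \<times> V - (\<lambda>v. (v, v)) ` V"
  have DE: "D \<subseteq> E"
  proof
    fix q assume "q \<in> D"
    then obtain u v where q: "q = (u, v)" "u \<in> V" "v \<in> V" "u \<noteq> v" by (auto simp: D_def)
    then have "A u \<inter> A v \<noteq> {}" using assms(2) unfolding pairwise_intersecting_def by blast
    then obtain p where p: "p \<in> A u" "p \<in> A v" by blast
    have "p \<in> {lo (u,False)..hi (u,False)} \<or> p \<in> {lo (u,True)..hi (u,True)}"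
    proof -
      have "A u = {la u..ha u} \<union> {lc u..hc u}" using H q(2) by blast
      then show ?thesis using p(1) by (simp add: lo_def hi_def)
    qed
    then obtain s where s: "p \<in> {lo (u,s)..hi (u,s)}" by blast
    have "p \<in> {lo (v,False)..hi (v,False)} \<or> p \<in> {lo (v,True)..hi (v,True)}"
    proof -
      have "A v = {la v..ha v} \<union> {lc v..hc v}" using H q(3) by blast
      then show ?thesis using p(2) by (simp add: lo_def hi_def)
    qed
    then obtain t where t: "p \<in> {lo (v,t)..hi (v,t)}" by blast
    have m: "(u,s) \<in> X" "(v,t) \<in> X" using q by (auto simp: X_def)
    have i: "{lo (u,s)..hi (u,s)} \<inter> {lo (v,t)..hi (v,t)} \<noteq> {}" using s t by blast
    have "(fst (u,s), fst (v,t)) \<in> E" unfolding E_def using m i q(4)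
      by (intro CollectI exI[of _ "(u,s)"] exI[of _ "(v,t)"]) simp
    then show "q \<in> E" using q by simp
  qed
  have cardD: "card D = n * n - n"
  proof -
    have "card ((\<lambda>v. (v, v)) ` V) = n" using assms(3) by (simp add: card_image inj_on_def)
    moreover have "(\<lambda>v. (v, v)) ` V \<subseteq> V \<times> V" by auto
    ultimately show ?thesis unfolding D_def using finV assms(3)
      by (simp add: card_Diff_subset card_cartesian_product)
  qed
  have nat_ineq: "n * n - n \<le> 2 * gsum (a-1) (2 * n)"
    using card_mono[OF Efin DE] cardD Ebound by simp
  have "real (n * n - n) \<le> real (2 * gsum (a-1) (2 * n))" using nat_ineq by linarith
  moreover have "real (n * n - n) = real n * real n - real n" by (simp add: of_nat_diff)
  moreover have "real (2 * gsum (a-1) (2 * n)) = (real a - 1) * (4 * real n - real a)"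
  proof -
    have "\<not> 2 * n \<le> a - 1" using a_le assms(4) by linarith
    then have "real (2 * gsum (a-1) (2 * n)) = real (a-1) * (2 * real (2*n) - real (a-1) - 1)"
      by (simp only: gsum_closed if_False)
    also have "\<dots> = (real a - 1) * (4 * real n - real a)" using a1 by (simp add: of_nat_diff algebra_simps)
    finally show ?thesis .
  qed
  ultimately have key: "(real n)^2 - real n \<le> (real a - 1) * (4 * real n - real a)"
    by (simp add: power2_eq_square)
  have N1: "real n \<ge> 1" using assms(4) by simp
  note F = final_arith[OF key N1]
  have c1: "of_int \<lceil>2 * real n + 1/2 - sqrt (3 * (real n)^2 - real n + 1/4)\<rceil> \<le> real a"
  proof -
    have "\<lceil>2 * real n + 1/2 - sqrt (3 * (real n)^2 - real n + 1/4)\<rceil> \<le> int a"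
      using F(1) by (simp add: ceiling_le_iff)
    then show ?thesis by (metis of_int_le_iff of_int_of_nat_eq)
  qed
  have c3: "real n \<le> of_int \<lfloor>2 * real a - 3/2 + sqrt (3 * (real a)^2 - 5 * real a + 9/4)\<rfloor>"
  proof -
    have "int n \<le> \<lfloor>2 * real a - 3/2 + sqrt (3 * (real a)^2 - 5 * real a + 9/4)\<rfloor>"
      using F(3) by (simp add: le_floor_iff)
    then show ?thesis by (metis of_int_le_iff of_int_of_nat_eq)
  qed
  show ?thesis using c1 F(2) c3 unfolding a_def by simp
qed

end
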